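(* Let $\Gamma$ be a metrized graph that is a tree with $v$ vertices. Then $$W(\Gamma)=\frac{2v-1}{4}\,\ell(\Gamma)+ \frac{1}{8} \sum_{p, q \in V(\Gamma)} \mathrm{val}(p)\, \mathrm{val}(q)\, r(p,q).$$ In particular, if each edge length is equal to $1$, $$W(\Gamma)=\frac{(2v-1)(v-1)}{4}+ \frac{1}{8} \sum_{p, q \in V(\Gamma)} \mathrm{val}(p)\,\mathrm{val}(q)\, r(p,q).$$
   Context: A metrized graph is a finite connected graph each of whose edges is identified with a closed segment of positive length; its vertex set $V(\Gamma)$ is a finite nonempty set containing every point of valence $\neq 2$, and $v=\#V(\Gamma)$. $\mathrm{val}(p)$ is the valence of $p$ (number of directions emanating from $p$). $\ell(\Gamma)$ is the total length (sum of edge lengths). $r(p,q)$ is the effective resistance between $p$ and $q$ (edges as resistors with resistance equal to their lengths); on a tree it equals the path distance $d(p,q)$. The Wiener index is $W(\Gamma)=\frac12\sum_{p,q\in V(\Gamma)}d(p,q)$. *)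

theory Defs
  imports Main "HOL-Library.Multiset" Complex_Main
begin

definition metrized_graph :: "'a set \<Rightarrow> 'a set set \<Rightarrow> ('a set \<Rightarrow> real) \<Rightarrow> bool" where
  "metrized_graph V E len \<longleftrightarrow> finite V \<and> V \<noteq> {} \<and>
     (\<forall>e\<in>E. e \<subseteq> V \<and> card e = 2 \<and> len e > 0)"

definition is_walk :: "'a set set \<Rightarrow> 'a list \<Rightarrow> bool" where
  "is_walk E xs \<longleftrightarrow> xs \<noteq> [] \<and> (\<forall>i. Suc i < length xs \<longrightarrow> {xs ! i, xs ! Suc i} \<in> E)"

definition is_path :: "'a set set \<Rightarrow> 'a \<Rightarrow> 'a \<Rightarrow> 'a list \<Rightarrow> bool" where
  "is_path E p q xs \<longleftrightarrow> is_walk E xs \<and> distinct xs \<and> hd xs = p \<and> last xs = q"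

definition connected_graph :: "'a set \<Rightarrow> 'a set set \<Rightarrow> bool" where
  "connected_graph V E \<longleftrightarrow> (\<forall>p\<in>V. \<forall>q\<in>V. \<exists>xs. is_path E p q xs)"

definition acyclic_graph :: "'a set set \<Rightarrow> bool" where
  "acyclic_graph E \<longleftrightarrow> \<not> (\<exists>xs. length xs \<ge> 3 \<and> distinct xs \<and> is_walk E xs \<and> {last xs, hd xs} \<in> E)"

definition is_tree :: "'a set \<Rightarrow> 'a set set \<Rightarrow> bool" where
  "is_tree V E \<longleftrightarrow> connected_graph V E \<and> acyclic_graph E"

definition path_length :: "('a set \<Rightarrow> real) \<Rightarrow> 'a list \<Rightarrow> real" where
  "path_length len xs = (\<Sum>i<length xs - 1. len {xs ! i, xs ! Suc i})"

definition dist_graph :: "'a set set \<Rightarrow> ('a set \<Rightarrow> real) \<Rightarrow> 'a \<Rightarrow> 'a \<Rightarrow> real" where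
  "dist_graph E len p q = Inf {path_length len xs | xs. is_path E p q xs}"

text \<open>On a tree the effective resistance equals the path distance.\<close>
definition resistance_tree :: "'a set set \<Rightarrow> ('a set \<Rightarrow> real) \<Rightarrow> 'a \<Rightarrow> 'a \<Rightarrow> real" where
  "resistance_tree E len p q = dist_graph E len p q"

definition valence :: "'a set set \<Rightarrow> 'a \<Rightarrow> nat" where
  "valence E p = card {e\<in>E. p \<in> e}"

definition total_length :: "'a set set \<Rightarrow> ('a set \<Rightarrow> real) \<Rightarrow> real" where
  "total_length E len = (\<Sum>e\<in>E. len e)"

definition wiener_index :: "'a set \<Rightarrow> 'a set set \<Rightarrow> ('a set \<Rightarrow> real) \<Rightarrow> real" where
  "wiener_index V E len = (1/2) * (\<Sum>p\<in>V. \<Sum>q\<in>V. dist_graph E len p q)"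

end

theory Submission imports Defs begin

lemma distinct_nth_neq: "distinct xs \<Longrightarrow> i < length xs \<Longrightarrow> j < length xs \<Longrightarrow> i \<noteq> j \<Longrightarrow> xs ! i \<noteq> xs ! j"
  by (simp add: nth_eq_iff_index_eq)

lemma walk_mono: "is_walk E xs \<Longrightarrow> E \<subseteq> E' \<Longrightarrow> is_walk E' xs"
  unfolding is_walk_def by blast

lemma walk_rev: "is_walk E xs \<Longrightarrow> is_walk E (rev xs)"
  unfolding is_walk_def
proof (intro conjI allI impI)
  fix i assume w: "xs \<noteq> [] \<and> (\<forall>i. Suc i < length xs \<longrightarrow> {xs ! i, xs ! Suc i} \<in> E)"
    and i: "Suc i < length (rev xs)"
  let ?n = "length xs"
  have "{xs ! (?n - Suc (Suc i)), xs ! Suc (?n - Suc (Suc i))} \<in> E" using w i by simp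
  moreover have "Suc (?n - Suc (Suc i)) = ?n - Suc i" using i by simp
  ultimately show "{rev xs ! i, rev xs ! Suc i} \<in> E" using i
    by (simp add: rev_nth insert_commute)
qed auto

lemma path_rev: "is_path E p q xs \<Longrightarrow> is_path E q p (rev xs)"
  unfolding is_path_def using walk_rev
  by (metis distinct_rev hd_rev is_walk_def last_rev)

lemma path_length_rev: "path_length len (rev xs) = path_length len xs"
proof -
  let ?n = "length xs"
  let ?f = "\<lambda>j. len {xs ! j, xs ! Suc j}"
  have "path_length len (rev xs) = (\<Sum>i<?n - 1. ?f (?n - 1 - Suc i))"
    unfolding path_length_def
    by (rule sum.cong) (auto simp: rev_nth insert_commute Suc_diff_Suc numeral_2_eq_2)
  also have "\<dots> = sum ?f {..<?n - 1}" by (rule sum.nat_diff_reindex)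
  finally show ?thesis unfolding path_length_def .
qed

lemma dist_sym: "dist_graph E len p q = dist_graph E len q p"
proof -
  have "{path_length len xs |xs. is_path E p q xs} = {path_length len xs |xs. is_path E q p xs}"
    by (auto, metis path_length_rev path_rev rev_rev_ident, metis path_length_rev path_rev rev_rev_ident)
  thus ?thesis unfolding dist_graph_def by simp
qed


lemma walk_vertices: "is_walk E xs \<Longrightarrow> length xs \<ge> 2 \<Longrightarrow> \<forall>e\<in>E. e \<subseteq> V \<Longrightarrow> set xs \<subseteq> V"
proof
  fix z assume w: "is_walk E xs" and l: "length xs \<ge> 2" and ev: "\<forall>e\<in>E. e \<subseteq> V" and "z \<in> set xs"
  then obtain i where i: "i < length xs" "xs ! i = z" by (auto simp: in_set_conv_nth)
  show "z \<in> V"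
  proof (cases "Suc i < length xs")
    case True
    then have "{xs!i, xs ! Suc i} \<in> E" using w unfolding is_walk_def by blast
    then show ?thesis using ev i by auto
  next
    case False
    then have "Suc (i - 1) < length xs" "Suc (i-1) = i" using l i by auto
    then have "{xs!(i-1), xs ! i} \<in> E" using w unfolding is_walk_def by metis
    then show ?thesis using ev i by auto
  qed
qed

lemma leaf_exists:
  assumes mg: "metrized_graph V E len" and tr: "is_tree V E" and c: "card V \<ge> 2"
  shows "\<exists>x y. x \<in> V \<and> y \<in> V \<and> x \<noteq> y \<and> {x,y} \<in> E \<and> (\<forall>e\<in>E. x \<in> e \<longrightarrow> e = {x,y})"
proof -
  have fin: "finite V" and ev: "\<forall>e\<in>E. e \<subseteq> V" and c2: "\<forall>e\<in>E. card e = 2"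
    using mg unfolding metrized_graph_def by auto
  obtain a b where ab: "a \<in> V" "b \<in> V" "a \<noteq> b"
  proof -
    have "\<not> card V \<le> Suc 0" using c by simp
    then show ?thesis using card_le_Suc0_iff_eq[OF fin] that by blast
  qed
  then obtain zs where zs: "is_path E a b zs" using tr unfolding is_tree_def connected_graph_def by blast
  have zl: "length zs \<ge> 2"
  proof (rule ccontr)
    assume "\<not> ?thesis"
    then have "length zs \<le> 1" by simp
    moreover have "zs \<noteq> []" using zs unfolding is_path_def is_walk_def by simp
    ultimately obtain u where "zs = [u]" by (cases zs) auto
    then show False using zs ab unfolding is_path_def by force
  qed
  define P where "P k \<longleftrightarrow> (\<exists>xs. is_walk E xs \<and> distinct xs \<and> length xs \<ge> 2 \<and> length xs = k)" for k
  have "P (length zs)" using zs zl unfolding P_def is_path_def by blast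
  moreover have "\<forall>k. P k \<longrightarrow> k \<le> card V"
  proof (intro allI impI)
    fix k assume "P k"
    then obtain xs where "is_walk E xs" "distinct xs" "length xs \<ge> 2" "length xs = k"
      unfolding P_def by blast
    then have "set xs \<subseteq> V" using walk_vertices ev by blast
    then show "k \<le> card V" using card_mono[OF fin] distinct_card \<open>distinct xs\<close> \<open>length xs = k\<close>
      by metis
  qed
  ultimately obtain k where k: "P k" "\<forall>k'. P k' \<longrightarrow> k' \<le> k" using Nat.ex_has_greatest_nat[of P "length zs" "card V"] by blast
  then obtain xs where xs: "is_walk E xs" "distinct xs" "length xs \<ge> 2" "length xs = k"
    unfolding P_def by blast
  define n where "n = length xs"
  define x where "x = xs ! (n - 1)"
  define y where "y = xs ! (n - 2)"
  have n2: "n \<ge> 2" using xs n_def by simp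
  have s1: "Suc (n-2) < length xs" "Suc (n - 2) = n - 1" using n2 n_def by auto
  have "{xs ! (n-2), xs ! Suc (n-2)} \<in> E" using xs(1) s1(1) unfolding is_walk_def by blast
  then have xyE: "{y, x} \<in> E" unfolding x_def y_def s1(2) .
  have xy: "x \<noteq> y" using xs(2) n2 unfolding x_def y_def n_def by (simp add: nth_eq_iff_index_eq)
  have sV: "set xs \<subseteq> V" using walk_vertices xs ev by blast
  have xV: "x \<in> V" "y \<in> V" using sV n2 unfolding x_def y_def n_def by auto
  have lastx: "last xs = x" using n2 unfolding x_def n_def by (subst last_conv_nth) auto
  have leaf: "e = {x,y}" if e: "e \<in> E" "x \<in> e" for e
  proof -
    obtain z where ez: "e = {x, z}" "z \<noteq> x"
      using c2 e by (metis card_2_iff insert_commute insertE singletonD)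
    show ?thesis
    proof (cases "z \<in> set xs")
      case False
      have "is_walk E (xs @ [z])" unfolding is_walk_def
      proof (intro conjI allI impI)
        show "xs@[z] \<noteq> []" by simp
        fix i assume "Suc i < length (xs@[z])"
        then consider "Suc i < length xs" | "Suc i = length xs" by fastforce
        then show "{(xs@[z])!i, (xs@[z])!Suc i} \<in> E"
        proof cases
          case 1 then show ?thesis using xs(1) by (simp add: nth_append is_walk_def)
        next
          case 2 then have "(xs@[z])!i = x" "(xs@[z])!Suc i = z" using x_def n_def by (auto simp: nth_append simp flip: \<open>Suc i = length xs\<close>)
          then show ?thesis using e ez by simp
        qed
      qed
      moreover have "distinct (xs @ [z])" using False xs(2) by simp
      ultimately have "P (Suc k)" unfolding P_def using xs by auto
      then show ?thesis using k by fastforce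
    next
      case True
      then obtain i where i: "i < n" "xs ! i = z" unfolding n_def by (auto simp: in_set_conv_nth)
      have "i \<noteq> n - 1" using i ez x_def by auto
      show ?thesis
      proof (cases "i = n - 2")
        case True then show ?thesis using ez i y_def by simp
      next
        case False
        then have il: "i + 3 \<le> n" using \<open>i \<noteq> n - 1\<close> i by linarith
        define cs where "cs = drop i xs"
        have "length cs \<ge> 3" using il n_def cs_def by simp
        moreover have "distinct cs" using xs(2) cs_def by simp
        moreover have "is_walk E cs" using xs(1) il unfolding cs_def is_walk_def n_def
          by (auto simp: nth_drop)
        moreover have "{last cs, hd cs} \<in> E" using il i ez e lastx unfolding cs_def n_def
          by (simp add: hd_drop_conv_nth)
        ultimately show ?thesis using tr unfolding is_tree_def acyclic_graph_def by blast
      qed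
    qed
  qed
  have "{x,y} \<in> E" using xyE by (simp add: insert_commute)
  then show ?thesis using xV xy leaf by blast
qed


lemma path_length_nonneg:
  assumes "is_walk E xs" "\<forall>e\<in>E. len e > 0" shows "path_length len xs \<ge> 0"
  unfolding path_length_def
proof (rule sum_nonneg)
  fix i assume "i \<in> {..<length xs - 1}"
  then have "{xs!i, xs!Suc i} \<in> E" using assms(1) unfolding is_walk_def by auto
  then show "len {xs!i, xs!Suc i} \<ge> 0" using assms(2) by fastforce
qed

lemma path_self: "is_path E p p xs \<longleftrightarrow> xs = [p]"
proof
  assume a: "is_path E p p xs"
  then have ne: "xs \<noteq> []" "distinct xs" "hd xs = p" "last xs = p" unfolding is_path_def is_walk_def by auto
  have "length xs = 1"
  proof (rule ccontr)
    assume "length xs \<noteq> 1"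
    then have l: "length xs \<ge> 2" using ne by (cases xs) auto
    have "xs ! 0 = xs ! (length xs - 1)" using ne l by (simp add: hd_conv_nth last_conv_nth)
    moreover have "xs ! 0 = xs ! (length xs - 1) \<longleftrightarrow> 0 = length xs - 1"
      by (rule nth_eq_iff_index_eq[OF ne(2)]) (use l in auto)
    ultimately have "0 = length xs - 1" by blast
    then show False using l by simp
  qed
  then show "xs = [p]" using ne by (cases xs) auto
qed (auto simp: is_path_def is_walk_def)

lemma dist_self: "dist_graph E len p p = 0"
  unfolding dist_graph_def path_self by (simp add: path_length_def)

lemma path_length_cons: "ys \<noteq> [] \<Longrightarrow> path_length len (x # ys) = len {x, hd ys} + path_length len ys"
  unfolding path_length_def
  by (cases ys) (simp_all add: sum.lessThan_Suc_shift del: sum.lessThan_Suc)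

context
  fixes V :: "'a set" and E :: "'a set set" and len and x y
  assumes mg: "metrized_graph V E len" and tr: "is_tree V E"
    and xV: "x \<in> V" and yV: "y \<in> V" and xy: "x \<noteq> y" and xyE: "{x,y} \<in> E"
    and leaf: "\<forall>e\<in>E. x \<in> e \<longrightarrow> e = {x,y}"
begin

lemma avoid:
  assumes "is_path E p q xs" "p \<noteq> x" "q \<noteq> x" shows "x \<notin> set xs"
proof
  assume "x \<in> set xs"
  then obtain i where i: "i < length xs" "xs ! i = x" by (auto simp: in_set_conv_nth)
  have w: "\<forall>i. Suc i < length xs \<longrightarrow> {xs ! i, xs ! Suc i} \<in> E" "distinct xs" "hd xs = p" "last xs = q" "xs \<noteq> []"
    using assms(1) unfolding is_path_def is_walk_def by auto
  have "i \<noteq> 0"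
  proof
    assume "i = 0"
    then have "hd xs = x" using i w(5) by (simp add: hd_conv_nth)
    then show False using w(3) assms(2) by simp
  qed
  moreover have "i \<noteq> length xs - 1"
  proof
    assume "i = length xs - 1"
    then have "last xs = x" using i w(5) by (simp add: last_conv_nth)
    then show False using w(4) assms(3) by simp
  qed
  ultimately have i2: "Suc (i - 1) = i" "Suc i < length xs" "i - 1 < length xs" using i by auto
  have e1: "{xs ! (i-1), x} \<in> E" using w(1)[rule_format, of "i-1"] i2 i by simp
  have e2: "{x, xs ! Suc i} \<in> E" using w(1)[rule_format, of i] i2 i by simp
  have n1: "xs ! (i-1) \<noteq> xs ! i" by (rule distinct_nth_neq[OF w(2)]) (use i i2 in auto)
  have n2: "xs ! Suc i \<noteq> xs ! i" by (rule distinct_nth_neq[OF w(2)]) (use i i2 in auto)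
  have n3: "xs ! (i-1) \<noteq> xs ! Suc i" by (rule distinct_nth_neq[OF w(2)]) (use i i2 in auto)
  have "{xs ! (i-1), x} = {x,y}" using leaf[rule_format, OF e1] by simp
  then have a1: "xs ! (i-1) = y" using n1 unfolding i(2) by (auto simp: doubleton_eq_iff)
  have "{x, xs ! Suc i} = {x,y}" using leaf[rule_format, OF e2] by simp
  then have a2: "xs ! Suc i = y" using n2 unfolding i(2) by (auto simp: doubleton_eq_iff)
  show False using a1 a2 n3 by simp
qed

lemma path_E'_iff:
  assumes "p \<noteq> x" "q \<noteq> x"
  shows "is_path (E - {{x,y}}) p q xs \<longleftrightarrow> is_path E p q xs"
proof
  assume "is_path (E - {{x,y}}) p q xs" then show "is_path E p q xs"
    unfolding is_path_def using walk_mono by blast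
next
  assume a: "is_path E p q xs"
  then have nx: "x \<notin> set xs" using avoid assms by blast
  have "is_walk (E - {{x,y}}) xs" unfolding is_walk_def
  proof (intro conjI allI impI)
    show "xs \<noteq> []" using a unfolding is_path_def is_walk_def by auto
    fix i assume i: "Suc i < length xs"
    then have "{xs!i, xs!Suc i} \<in> E" using a unfolding is_path_def is_walk_def by auto
    moreover have "x \<notin> {xs!i, xs!Suc i}" using nx i by auto
    ultimately show "{xs!i, xs!Suc i} \<in> E - {{x,y}}" by auto
  qed
  then show "is_path (E - {{x,y}}) p q xs" using a unfolding is_path_def by auto
qed

lemma dist_E': "p \<noteq> x \<Longrightarrow> q \<noteq> x \<Longrightarrow> dist_graph (E - {{x,y}}) len p q = dist_graph E len p q"
  unfolding dist_graph_def using path_E'_iff by simp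

lemma path_from_leaf:
  assumes "q \<noteq> x"
  shows "is_path E x q xs \<longleftrightarrow> (\<exists>ys. xs = x # ys \<and> is_path E y q ys)"
proof
  assume a: "is_path E x q xs"
  then have w: "\<forall>i. Suc i < length xs \<longrightarrow> {xs ! i, xs ! Suc i} \<in> E" "distinct xs" "hd xs = x" "last xs = q" "xs \<noteq> []"
    unfolding is_path_def is_walk_def by auto
  then obtain ys where xs: "xs = x # ys" by (cases xs) auto
  have ys: "ys \<noteq> []" using xs w assms by auto
  have "{x, hd ys} \<in> E" using w(1)[rule_format, of 0] xs ys by (cases ys) auto
  then have "{x, hd ys} = {x,y}" using leaf by simp
  moreover have "hd ys \<noteq> x" using w(2) xs ys by (cases ys) auto
  ultimately have hy: "hd ys = y" by (metis doubleton_eq_iff)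
  have "is_walk E ys" unfolding is_walk_def
  proof (intro conjI allI impI)
    show "ys \<noteq> []" by fact
    fix i assume "Suc i < length ys"
    then show "{ys!i, ys!Suc i} \<in> E" using w(1)[rule_format, of "Suc i"] xs by simp
  qed
  then have "is_path E y q ys" using hy w xs ys unfolding is_path_def by auto
  then show "\<exists>ys. xs = x # ys \<and> is_path E y q ys" using xs by blast
next
  assume "\<exists>ys. xs = x # ys \<and> is_path E y q ys"
  then obtain ys where xs: "xs = x # ys" and p: "is_path E y q ys" by blast
  have nx: "x \<notin> set ys" using avoid[OF p] xy assms by auto
  have ys: "ys \<noteq> []" "hd ys = y" "last ys = q" "distinct ys" and w: "is_walk E ys"
    using p unfolding is_path_def is_walk_def by auto
  have "is_walk E xs" unfolding is_walk_def
  proof (intro conjI allI impI)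
    show "xs \<noteq> []" using xs by simp
    fix i assume i: "Suc i < length xs"
    show "{xs!i, xs!Suc i} \<in> E"
    proof (cases i)
      case 0 then show ?thesis using xs ys xyE by (cases ys) auto
    next
      case (Suc j) then show ?thesis using xs w i unfolding is_walk_def by auto
    qed
  qed
  then show "is_path E x q xs" using xs ys nx unfolding is_path_def by auto
qed

lemma dist_from_leaf:
  assumes "q \<noteq> x" "q \<in> V"
  shows "dist_graph E len x q = len {x,y} + dist_graph E len y q"
proof -
  let ?A = "{ys. is_path E y q ys}"
  have pos: "\<forall>e\<in>E. len e > 0" using mg unfolding metrized_graph_def by auto
  have "\<exists>ys. is_path E y q ys" using tr yV assms(2) unfolding is_tree_def connected_graph_def by blast
  then have ne: "?A \<noteq> {}" by simp
  have bdd: "bdd_below (path_length len ` ?A)"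
    by (rule bdd_belowI[of _ 0]) (use path_length_nonneg pos in \<open>auto simp: is_path_def\<close>)
  have inf: "(INF ys\<in>?A. len {x,y} + path_length len ys) = len {x,y} + (INF ys\<in>?A. path_length len ys)"
    using Inf_add_eq[OF bdd ne] .
  have "{path_length len xs |xs. is_path E x q xs} = (\<lambda>ys. len {x,y} + path_length len ys) ` ?A"
  proof -
    have "{path_length len xs |xs. is_path E x q xs} = {path_length len (x # ys) |ys. is_path E y q ys}"
      by (auto simp: path_from_leaf[OF assms(1)])
    also have "\<dots> = (\<lambda>ys. len {x,y} + path_length len ys) ` ?A"
    proof -
      have "path_length len (x # ys) = len {x,y} + path_length len ys" if "is_path E y q ys" for ys
        using that path_length_cons[of ys len x] unfolding is_path_def is_walk_def by auto
      then show ?thesis unfolding image_def by (auto, metis)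
    qed
    finally show ?thesis .
  qed
  moreover have "{path_length len xs |xs. is_path E y q xs} = path_length len ` ?A" by auto
  ultimately show ?thesis unfolding dist_graph_def using inf by simp
qed

end


lemma tree_key:
  assumes "metrized_graph V E len" "is_tree V E"
  shows "card E = card V - 1 \<and> (\<forall>p\<in>V. (\<Sum>e\<in>E. \<Sum>q\<in>e. dist_graph E len p q)
            = 2 * (\<Sum>q\<in>V. dist_graph E len p q) - total_length E len)"
  using assms
proof (induction "card V" arbitrary: V E rule: less_induct)
  case less
  note mg = less.prems(1) and tr = less.prems(2)
  have fin: "finite V" and Vne: "V \<noteq> {}" and ev: "\<forall>e\<in>E. e \<subseteq> V" and c2: "\<forall>e\<in>E. card e = 2"
    and pos: "\<forall>e\<in>E. len e > 0"
    using mg unfolding metrized_graph_def by auto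
  have finE: "finite E" using ev fin by (meson Pow_iff finite_Pow_iff finite_subset subsetI)
  have "card V \<ge> 1" using fin Vne by (simp add: Suc_leI card_gt_0_iff)
  then consider "card V = 1" | "card V \<ge> 2" by linarith
  then show ?case
  proof cases
    case 1
    then obtain a where Va: "V = {a}" using card_1_singletonE by blast
    have E0: "E = {}"
    proof (rule ccontr)
      assume "E \<noteq> {}"
      then obtain e where e: "e \<in> E" by blast
      then have "card e \<le> card V" using ev fin by (simp add: card_mono)
      then show False using e c2 Va by simp
    qed
    show ?thesis using Va E0 by (simp add: dist_self total_length_def)
  next
    case 2
    obtain x y where x: "x \<in> V" "y \<in> V" "x \<noteq> y" "{x,y} \<in> E" "\<forall>e\<in>E. x \<in> e \<longrightarrow> e = {x,y}"
      using leaf_exists[OF mg tr 2] by blast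
    define V' where "V' = V - {x}"
    define E' where "E' = E - {{x,y}}"
    define L where "L = len {x,y}"
    define d where "d = dist_graph E len"
    have eV': "e \<subseteq> V'" if "e \<in> E'" for e
    proof -
      have e: "e \<in> E" "e \<noteq> {x,y}" using that unfolding E'_def by auto
      then have "x \<notin> e" using x(5) by auto
      then show ?thesis using e(1) ev unfolding V'_def by auto
    qed
    have EsubE: "E' \<subseteq> E" unfolding E'_def by blast
    have mg': "metrized_graph V' E' len"
      unfolding metrized_graph_def
    proof (intro conjI ballI)
      show "finite V'" using fin unfolding V'_def by simp
      show "V' \<noteq> {}" using x(2) x(3) unfolding V'_def by blast
      fix e assume e: "e \<in> E'"
      show "e \<subseteq> V'" using eV'[OF e] .
      show "card e = 2" using c2 e EsubE by blast
      show "len e > 0" using pos e EsubE by blast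
    qed
    have conn: "connected_graph V E" and acy: "acyclic_graph E" using tr unfolding is_tree_def by auto
    have tr': "is_tree V' E'"
      unfolding is_tree_def
    proof
      show "connected_graph V' E'" unfolding connected_graph_def
      proof (intro ballI)
        fix p q assume pq: "p \<in> V'" "q \<in> V'"
        then have "p \<in> V" "q \<in> V" "p \<noteq> x" "q \<noteq> x" unfolding V'_def by auto
        then obtain xs where xs: "is_path E p q xs" using conn unfolding connected_graph_def by blast
        have "is_path E' p q xs"
          using path_E'_iff[OF mg tr x, of p q xs] xs \<open>p \<noteq> x\<close> \<open>q \<noteq> x\<close> unfolding E'_def by simp
        then show "\<exists>xs. is_path E' p q xs" by blast
      qed
      show "acyclic_graph E'" unfolding acyclic_graph_def
      proof
        assume "\<exists>xs. length xs \<ge> 3 \<and> distinct xs \<and> is_walk E' xs \<and> {last xs, hd xs} \<in> E'"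
        then obtain xs where "length xs \<ge> 3" "distinct xs" "is_walk E' xs" "{last xs, hd xs} \<in> E'" by blast
        then have "length xs \<ge> 3 \<and> distinct xs \<and> is_walk E xs \<and> {last xs, hd xs} \<in> E"
          using walk_mono[OF _ EsubE] EsubE by blast
        then show False using acy unfolding acyclic_graph_def by blast
      qed
    qed
    have lt: "card V' < card V" unfolding V'_def by (rule card_Diff1_less[OF fin x(1)])
    have IH: "card E' = card V' - 1 \<and> (\<forall>p\<in>V'. (\<Sum>e\<in>E'. \<Sum>q\<in>e. dist_graph E' len p q)
            = 2 * (\<Sum>q\<in>V'. dist_graph E' len p q) - total_length E' len)"
      using less.hyps[OF lt mg' tr'] .
    have dE': "dist_graph E' len p q = d p q" if "p \<in> V'" "q \<in> V'" for p q
    proof -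
      have "p \<noteq> x" "q \<noteq> x" using that unfolding V'_def by auto
      then show ?thesis using dist_E'[OF mg tr x, of p q] unfolding E'_def d_def by simp
    qed
    have IH2: "(\<Sum>e\<in>E'. \<Sum>q\<in>e. d p q) = 2 * (\<Sum>q\<in>V'. d p q) - total_length E' len" if "p \<in> V'" for p
    proof -
      have "(\<Sum>e\<in>E'. \<Sum>q\<in>e. d p q) = (\<Sum>e\<in>E'. \<Sum>q\<in>e. dist_graph E' len p q)"
      proof (rule sum.cong[OF refl])
        fix e assume "e \<in> E'"
        then have "e \<subseteq> V'" by (rule eV')
        then show "(\<Sum>q\<in>e. d p q) = (\<Sum>q\<in>e. dist_graph E' len p q)"
          using dE' that by (intro sum.cong[OF refl]) auto
      qed
      also have "\<dots> = 2 * (\<Sum>q\<in>V'. dist_graph E' len p q) - total_length E' len"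
        using conjunct2[OF IH] that by (rule bspec)
      also have "(\<Sum>q\<in>V'. dist_graph E' len p q) = (\<Sum>q\<in>V'. d p q)"
        using dE' that by (intro sum.cong[OF refl]) auto
      finally show ?thesis .
    qed
    have xE': "{x,y} \<notin> E'" unfolding E'_def by simp
    have EE: "E = insert {x,y} E'" unfolding E'_def using insert_Diff[OF x(4)] by simp
    have finE': "finite E'" using finE unfolding E'_def by simp
    have VV: "V = insert x V'" "x \<notin> V'" unfolding V'_def using x(1) by auto
    have finV': "finite V'" using fin unfolding V'_def by simp
    have yV': "y \<in> V'" using x unfolding V'_def by simp
    have "card V' \<noteq> 0" using yV' finV' by auto
    then have cV': "card V' \<ge> 1" by simp
    have cardE: "card E = card V - 1"
      using IH EE xE' finE' VV finV' cV' by (simp add: card_insert_disjoint)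
    have cE': "real (card E') = real (card V') - 1" using IH cV' by (simp add: of_nat_diff)
    have tl: "total_length E len = L + total_length E' len"
      unfolding total_length_def L_def EE using finE' xE' by simp
    have sumE: "(\<Sum>e\<in>E. \<Sum>q\<in>e. d p q) = d p x + d p y + (\<Sum>e\<in>E'. \<Sum>q\<in>e. d p q)" for p
      unfolding EE using finE' xE' x(3) by simp
    have sumV: "(\<Sum>q\<in>V. d p q) = d p x + (\<Sum>q\<in>V'. d p q)" for p
      unfolding VV(1) using finV' VV(2) by simp
    have dx: "d x q = L + d y q" if "q \<in> V'" for q
      using dist_from_leaf[OF mg tr x] that unfolding d_def L_def V'_def by auto
    have dxx: "d x x = 0" unfolding d_def by (rule dist_self)
    have dyy: "d y y = 0" unfolding d_def by (rule dist_self)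
    have dsym: "d p q = d q p" for p q unfolding d_def by (rule dist_sym)
    have main: "(\<Sum>e\<in>E. \<Sum>q\<in>e. d p q) = 2 * (\<Sum>q\<in>V. d p q) - total_length E len" if p: "p \<in> V" for p
    proof (cases "p = x")
      case False
      then have pV': "p \<in> V'" using p unfolding V'_def by simp
      have "d p x = L + d p y" using dx[OF pV'] dsym[of p x] dsym[of y p] by simp
      then show ?thesis using sumE[of p] sumV[of p] IH2[OF pV'] tl by linarith
    next
      case True
      have s1: "(\<Sum>e\<in>E'. \<Sum>q\<in>e. d x q) = (\<Sum>e\<in>E'. 2 * L + (\<Sum>q\<in>e. d y q))"
      proof (rule sum.cong[OF refl])
        fix e assume e: "e \<in> E'"
        then have ce: "card e = 2" using c2 unfolding E'_def by auto
        have "(\<Sum>q\<in>e. d x q) = (\<Sum>q\<in>e. L + d y q)" using dx eV'[OF e] by (intro sum.cong[OF refl]) auto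
        also have "\<dots> = 2 * L + (\<Sum>q\<in>e. d y q)" using ce by (simp add: sum.distrib)
        finally show "(\<Sum>q\<in>e. d x q) = 2 * L + (\<Sum>q\<in>e. d y q)" .
      qed
      have s2: "(\<Sum>q\<in>V'. d x q) = (\<Sum>q\<in>V'. L + d y q)" using dx by (intro sum.cong[OF refl]) auto
      have dxy: "d x y = L" using dx[OF yV'] dyy by simp
      define C where "C = real (card V')"
      have s1': "(\<Sum>e\<in>E'. \<Sum>q\<in>e. d x q) = 2 * (L * C) - 2 * L + (\<Sum>e\<in>E'. \<Sum>q\<in>e. d y q)"
      proof -
        have "(\<Sum>e\<in>E'. \<Sum>q\<in>e. d x q) = 2 * L * real (card E') + (\<Sum>e\<in>E'. \<Sum>q\<in>e. d y q)"
          unfolding s1 by (simp add: sum.distrib)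
        also have "2 * L * real (card E') = 2 * (L * C) - 2 * L" unfolding cE' C_def by (simp add: algebra_simps)
        finally show ?thesis .
      qed
      have s2': "(\<Sum>q\<in>V'. d x q) = L * C + (\<Sum>q\<in>V'. d y q)"
        unfolding s2 C_def by (simp add: sum.distrib mult.commute)
      show ?thesis unfolding True using sumE[of x] sumV[of x] s1' s2' IH2[OF yV'] tl dxx dxy by linarith
    qed
    show ?thesis using cardE main unfolding d_def by blast
  qed
qed


lemma double_count:
  assumes "finite V" "\<forall>e\<in>E. e \<subseteq> V" "finite E"
  shows "(\<Sum>q\<in>V. real (valence E q) * f q) = (\<Sum>e\<in>E. \<Sum>q\<in>e. f q)"
proof -
  have "(\<Sum>e\<in>E. \<Sum>q\<in>e. f q) = (\<Sum>e\<in>E. \<Sum>q\<in>V. if q \<in> e then f q else 0)"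
  proof (rule sum.cong[OF refl])
    fix e assume "e \<in> E"
    then have "V \<inter> e = e" using assms by blast
    then show "(\<Sum>q\<in>e. f q) = (\<Sum>q\<in>V. if q \<in> e then f q else 0)"
      using sum.inter_restrict[OF assms(1), of f e] by simp
  qed
  also have "\<dots> = (\<Sum>q\<in>V. \<Sum>e\<in>E. if q \<in> e then f q else 0)" by (rule sum.swap)
  also have "\<dots> = (\<Sum>q\<in>V. real (valence E q) * f q)"
  proof (rule sum.cong[OF refl])
    fix q
    have "(\<Sum>e\<in>E. if q \<in> e then f q else 0) = (\<Sum>e\<in>{e\<in>E. q \<in> e}. f q)"
      using sum.inter_filter[OF assms(3), of "\<lambda>_. f q" "\<lambda>e. q \<in> e"] by simp
    then show "(\<Sum>e\<in>E. if q \<in> e then f q else 0) = real (valence E q) * f q"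
      unfolding valence_def by simp
  qed
  finally show ?thesis by simp
qed

theorem theorem4p3:
  fixes V :: "'a set" and E :: "'a set set" and len :: "'a set \<Rightarrow> real"
  assumes "metrized_graph V E len" and "is_tree V E"
  shows "wiener_index V E len =
           (2 * real (card V) - 1) / 4 * total_length E len
           + 1/8 * (\<Sum>p\<in>V. \<Sum>q\<in>V. real (valence E p) * real (valence E q) * resistance_tree E len p q)
       \<and> ((\<forall>e\<in>E. len e = 1) \<longrightarrow> wiener_index V E len =
           (2 * real (card V) - 1) * (real (card V) - 1) / 4
           + 1/8 * (\<Sum>p\<in>V. \<Sum>q\<in>V. real (valence E p) * real (valence E q) * resistance_tree E len p q))"
proof -
  have fin: "finite V" and Vne: "V \<noteq> {}" and ev: "\<forall>e\<in>E. e \<subseteq> V" and c2: "\<forall>e\<in>E. card e = 2"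
    using assms(1) unfolding metrized_graph_def by auto
  have finE: "finite E" using ev fin by (meson Pow_iff finite_Pow_iff finite_subset subsetI)
  define d where "d = dist_graph E len"
  define D where "D p = (\<Sum>q\<in>V. d p q)" for p
  define ell where "ell = total_length E len"
  define T where "T = (\<Sum>p\<in>V. \<Sum>q\<in>V. real (valence E p) * real (valence E q) * resistance_tree E len p q)"
  define n where "n = real (card V)"
  note key = tree_key[OF assms]
  have cV: "card V \<ge> 1" using fin Vne by (simp add: Suc_leI card_gt_0_iff)
  have cE: "real (card E) = n - 1" using key cV unfolding n_def by (simp add: of_nat_diff)
  have dsym: "d p q = d q p" for p q unfolding d_def by (rule dist_sym)
  have K: "(\<Sum>q\<in>V. real (valence E q) * d p q) = 2 * D p - ell" if "p \<in> V" for p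
    using double_count[OF fin ev finE, of "d p"] key that unfolding D_def ell_def d_def by simp
  have sval: "(\<Sum>p\<in>V. real (valence E p)) = 2 * (n - 1)"
  proof -
    have "(\<Sum>p\<in>V. real (valence E p)) = (\<Sum>p\<in>V. real (valence E p) * 1)" by simp
    also have "\<dots> = (\<Sum>e\<in>E. \<Sum>q\<in>e. 1)" by (rule double_count[OF fin ev finE])
    also have "\<dots> = (\<Sum>e\<in>E. 2)" using c2 by (intro sum.cong refl) simp
    finally show ?thesis using cE by simp
  qed
  have W: "wiener_index V E len = 1/2 * (\<Sum>p\<in>V. D p)"
    unfolding wiener_index_def D_def d_def by simp
  have T1: "T = (\<Sum>p\<in>V. real (valence E p) * (2 * D p - ell))"
  proof -
    have "T = (\<Sum>p\<in>V. real (valence E p) * (\<Sum>q\<in>V. real (valence E q) * d p q))"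
      unfolding T_def resistance_tree_def d_def by (simp add: sum_distrib_left mult.assoc)
    also have "\<dots> = (\<Sum>p\<in>V. real (valence E p) * (2 * D p - ell))"
      using K by (intro sum.cong refl) simp
    finally show ?thesis .
  qed
  have T2: "(\<Sum>p\<in>V. real (valence E p) * D p) = (\<Sum>q\<in>V. 2 * D q - ell)"
  proof -
    have "(\<Sum>p\<in>V. real (valence E p) * D p) = (\<Sum>p\<in>V. \<Sum>q\<in>V. real (valence E p) * d q p)"
      unfolding D_def by (simp add: sum_distrib_left dsym)
    also have "\<dots> = (\<Sum>q\<in>V. \<Sum>p\<in>V. real (valence E p) * d q p)" by (rule sum.swap)
    also have "\<dots> = (\<Sum>q\<in>V. 2 * D q - ell)" using K by (intro sum.cong refl) simp
    finally show ?thesis .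
  qed
  have T3: "T = 8 * wiener_index V E len - (4 * n - 2) * ell"
  proof -
    have "T = 2 * (\<Sum>p\<in>V. real (valence E p) * D p) - ell * (\<Sum>p\<in>V. real (valence E p))"
      unfolding T1 by (simp add: right_diff_distrib sum_subtractf sum_distrib_left sum_distrib_right algebra_simps)
    also have "\<dots> = 2 * (2 * (\<Sum>q\<in>V. D q) - n * ell) - ell * (2 * (n - 1))"
      unfolding T2 sval by (simp add: sum_subtractf sum_distrib_left n_def)
    finally show ?thesis unfolding W by (simp add: algebra_simps)
  qed
  have part1: "wiener_index V E len = (2 * n - 1) / 4 * ell + 1/8 * T"
    using T3 by (simp add: field_simps)
  have part2: "ell = n - 1" if "\<forall>e\<in>E. len e = 1"
    unfolding ell_def total_length_def using that cE by simp
  show ?thesis using part1 part2 unfolding n_def ell_def T_def by simp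
qed

end
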